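(* Let $\mathcal H$ be a real Hilbert space and let $\Phi:\mathbb R\to\mathcal H$ be a differentiable map with Lipschitz-continuous differential (so the number of parameters is $W=1$). For a target $\mathbf f\in\mathcal H$ let $L_{\mathbf f}(w)=\frac12\|\mathbf f-\Phi(w)\|^2$ and let $w(t)$, $t\ge 0$, be the solution of the gradient flow $\frac{dw}{dt}=-\frac{d}{dw}L_{\mathbf f}(w(t))$ with $w(0)=0$. Let $F_\Phi=\{\mathbf f\in\mathcal H:\inf_{t\ge0}L_{\mathbf f}(w(t))=0\}$. If $\mathbf f\in F_\Phi$, then either $\mathbf f=\Phi(w)$ for some $w\in\mathbb R$, or $\mathbf f\in\{\mathbf f_-,\mathbf f_+\}$, where $\mathbf f_\pm=\lim_{w\to\pm\infty}\Phi(w)$ (whenever these limits exist). In particular, if $\mathcal H=\mathbb R^d$ with $2\le d<\infty$, then $F_\Phi$ has Lebesgue measure $0$ in $\mathcal H$.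
   Context: The gradient flow solution exists and is unique for all $t\ge0$ under the stated regularity of $\Phi$. Elements of $F_\Phi$ are called GF-learnable targets. *)

theory Defs
  imports "HOL-Analysis.Analysis"
begin

definition gf_loss :: "(real \<Rightarrow> 'a::real_normed_vector) \<Rightarrow> 'a \<Rightarrow> real \<Rightarrow> real" where
  "gf_loss \<Phi> f v = (1/2) * (norm (f - \<Phi> v))\<^sup>2"

definition gf_solution :: "(real \<Rightarrow> 'a::real_normed_vector) \<Rightarrow> 'a \<Rightarrow> (real \<Rightarrow> real) \<Rightarrow> bool" where
  "gf_solution \<Phi> f w \<longleftrightarrow> w 0 = 0 \<and>
     (\<forall>t\<ge>0. (w has_real_derivative (- deriv (gf_loss \<Phi> f) (w t))) (at t within {0..}))"

text \<open>The set F_Phi of GF-learnable targets (the flow solution is unique).\<close>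
definition GF_learnable :: "(real \<Rightarrow> 'a::real_normed_vector) \<Rightarrow> 'a set" where
  "GF_learnable \<Phi> = {f. \<exists>w. gf_solution \<Phi> f w \<and> (INF t\<in>{0..}. gf_loss \<Phi> f (w t)) = 0}"

end

theory Submission
  imports Defs
begin

lemma loss_deriv:
  fixes \<Phi> \<Phi>' :: "real \<Rightarrow> 'a::real_inner"
  assumes "(\<Phi> has_vector_derivative \<Phi>' v) (at v)"
  shows "(gf_loss \<Phi> f has_real_derivative inner (\<Phi> v - f) (\<Phi>' v)) (at v)"
proof -
  have e: "gf_loss \<Phi> f = (\<lambda>x. (1/2) * inner (f - \<Phi> x) (f - \<Phi> x))"
    by (auto simp: gf_loss_def power2_norm_eq_inner fun_eq_iff)
  have d: "((\<lambda>x. f - \<Phi> x) has_derivative (\<lambda>h. - (h *\<^sub>R \<Phi>' v))) (at v)"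
    using assms unfolding has_vector_derivative_def
    by (auto intro!: derivative_eq_intros)
  have "((\<lambda>x. (1/2) * inner (f - \<Phi> x) (f - \<Phi> x)) has_derivative
     (\<lambda>h. (1/2) * (inner (f - \<Phi> v) (- (h *\<^sub>R \<Phi>' v)) + inner (- (h *\<^sub>R \<Phi>' v)) (f - \<Phi> v)))) (at v)"
    by (intro has_derivative_mult_right has_derivative_inner d)
  moreover have "(\<lambda>h. (1/2) * (inner (f - \<Phi> v) (- (h *\<^sub>R \<Phi>' v)) + inner (- (h *\<^sub>R \<Phi>' v)) (f - \<Phi> v)))
     = (\<lambda>h. inner (\<Phi> v - f) (\<Phi>' v) * h)"
    by (auto simp: fun_eq_iff inner_commute algebra_simps)
  ultimately show ?thesis unfolding e has_field_derivative_def by simp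
qed

lemma part1:
  fixes \<Phi> \<Phi>' :: "real \<Rightarrow> 'a::real_inner" and f :: 'a
  assumes dPhi: "\<And>v. (\<Phi> has_vector_derivative \<Phi>' v) (at v)"
    and fl: "f \<in> GF_learnable \<Phi>"
  shows "(\<exists>v. f = \<Phi> v) \<or> (\<Phi> \<longlongrightarrow> f) at_bot \<or> (\<Phi> \<longlongrightarrow> f) at_top"
proof -
  define L where "L = gf_loss \<Phi> f"
  define D where "D = (\<lambda>v. inner (\<Phi> v - f) (\<Phi>' v))"
  have dL: "\<And>v. (L has_real_derivative D v) (at v)"
    unfolding L_def D_def by (rule loss_deriv[OF dPhi])
  have contL: "continuous_on S L" for S
    using dL by (meson DERIV_isCont continuous_at_imp_continuous_on)
  have Lnn: "\<And>v. L v \<ge> 0" by (simp add: L_def gf_loss_def)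
  obtain w where sol: "gf_solution \<Phi> f w" and inf0: "(INF t\<in>{0..}. L (w t)) = 0"
    using fl unfolding GF_learnable_def L_def by blast
  have w0: "w 0 = 0" using sol by (simp add: gf_solution_def)
  have dw: "\<And>t. t \<ge> 0 \<Longrightarrow> (w has_real_derivative - D (w t)) (at t within {0..})"
    using sol unfolding gf_solution_def D_def[symmetric] L_def[symmetric]
    using DERIV_imp_deriv[OF dL] by simp
  have contw: "continuous_on {0..} w"
    unfolding continuous_on_eq_continuous_within
    by (intro ballI DERIV_continuous[OF dw]) simp
  have dLw: "\<And>t. t \<ge> 0 \<Longrightarrow> ((\<lambda>t. L (w t)) has_real_derivative D (w t) * - D (w t)) (at t within {0..})"
    by (rule DERIV_chain2[OF dL dw])
  have contLw: "continuous_on {0..} (\<lambda>t. L (w t))"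
    unfolding continuous_on_eq_continuous_within
    by (intro ballI DERIV_continuous[OF dLw]) simp
  have mono: "L (w b) \<le> L (w a)" if "0 \<le> a" "a \<le> b" for a b
  proof (rule DERIV_nonpos_imp_decreasing_open[OF \<open>a \<le> b\<close>])
    fix x assume "a < x" "x < b"
    then have "x \<in> interior {0::real..}" using that by simp
    then have "at x within {0..} = at x" by (rule at_within_interior)
    then show "\<exists>y. ((\<lambda>t. L (w t)) has_real_derivative y) (at x) \<and> y \<le> 0"
      using dLw[of x] \<open>a < x\<close> that by (intro exI[of _ "D (w x) * - D (w x)"]) auto
  next
    show "continuous_on {a..b} (\<lambda>t. L (w t))"
      using contLw by (rule continuous_on_subset) (use that in auto)
  qed
  have bdd: "bdd_below ((\<lambda>t. L (w t)) ` {0..})" by (rule bdd_belowI2[where m=0]) (rule Lnn)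
  have small: "\<exists>t\<ge>0. L (w t) < e" if "e > 0" for e
    using cINF_less_iff[OF _ bdd, of e] inf0 that by auto
  have bndT: "\<exists>M. \<forall>t\<in>{0..T}. \<bar>w t\<bar> \<le> M" for T
  proof -
    have "compact (w ` {0..T})"
      by (rule compact_continuous_image) (auto intro: continuous_on_subset[OF contw])
    then show ?thesis using compact_imp_bounded bounded_real by fastforce
  qed
  have conv: "(\<Phi> \<longlongrightarrow> f) F" if ev: "\<And>e. e > 0 \<Longrightarrow> eventually (\<lambda>v. L v < e) F" for F
  proof (rule tendstoI)
    fix e :: real assume "e > 0"
    then have "eventually (\<lambda>v. L v < e^2 / 2) F" by (intro ev) simp
    then show "eventually (\<lambda>v. dist (\<Phi> v) f < e) F"
    proof (rule eventually_mono)
      fix v assume "L v < e^2/2"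
      then have "(norm (f - \<Phi> v))^2 < e^2" by (simp add: L_def gf_loss_def)
      then have "norm (f - \<Phi> v) < e" using \<open>e > 0\<close> by (simp add: power_less_imp_less_base)
      then show "dist (\<Phi> v) f < e" by (simp add: dist_norm norm_minus_commute)
    qed
  qed
  show ?thesis
  proof (cases "\<exists>v. f = \<Phi> v")
    case True then show ?thesis by simp
  next
    case False
    then have Lpos: "\<And>v. L v > 0" by (auto simp: L_def gf_loss_def)
    show ?thesis
    proof (cases "\<forall>B. \<exists>s\<ge>0. w s > B")
      case up: True
      have "(\<Phi> \<longlongrightarrow> f) at_top"
      proof (rule conv)
        fix e :: real assume "e > 0"
        obtain T where T: "T \<ge> 0" "L (w T) < e" using small[OF \<open>e > 0\<close>] by auto
        obtain M where M: "\<forall>t\<in>{0..T}. \<bar>w t\<bar> \<le> M" using bndT by blast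
        show "eventually (\<lambda>v. L v < e) at_top"
        proof (rule eventually_at_top_linorderI[of "M + 1"])
          fix v assume v: "v \<ge> M + 1"
          obtain s where s: "s \<ge> 0" "w s > v" using up by blast
          have "s > T"
          proof (rule ccontr)
            assume "\<not> s > T"
            then have "\<bar>w s\<bar> \<le> M" using M s by auto
            then show False using s v by linarith
          qed
          have "w T \<le> v" using M T v by force
          then obtain t where t: "T \<le> t" "t \<le> s" "w t = v"
            using IVT'[of w T v s] s \<open>s > T\<close> continuous_on_subset[OF contw, of "{T..s}"] T by auto
          have "L v = L (w t)" using t by simp
          also have "\<dots> \<le> L (w T)" using mono[of T t] t T by simp
          finally show "L v < e" using T by simp
        qed
      qed
      then show ?thesis by simp
    next
      case nup: False
      show ?thesis
      proof (cases "\<forall>B. \<exists>s\<ge>0. w s < B")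
        case dn: True
        have "(\<Phi> \<longlongrightarrow> f) at_bot"
        proof (rule conv)
          fix e :: real assume "e > 0"
          obtain T where T: "T \<ge> 0" "L (w T) < e" using small[OF \<open>e > 0\<close>] by auto
          obtain M where M: "\<forall>t\<in>{0..T}. \<bar>w t\<bar> \<le> M" using bndT by blast
          show "eventually (\<lambda>v. L v < e) at_bot"
          proof (rule eventually_at_bot_linorderI[of "- M - 1"])
            fix v assume v: "v \<le> - M - 1"
            obtain s where s: "s \<ge> 0" "w s < v" using dn by blast
            have "s > T"
            proof (rule ccontr)
              assume "\<not> s > T"
              then have "\<bar>w s\<bar> \<le> M" using M s by auto
              then show False using s v by linarith
            qed
            have "v \<le> w T" using M T v by force
            then obtain t where t: "T \<le> t" "t \<le> s" "w t = v"
              using IVT2'[of w s v T] s \<open>s > T\<close> continuous_on_subset[OF contw, of "{T..s}"] T by auto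
            have "L v = L (w t)" using t by simp
            also have "\<dots> \<le> L (w T)" using mono[of T t] t T by simp
            finally show "L v < e" using T by simp
          qed
        qed
        then show ?thesis by simp
      next
        case ndn: False
        obtain B where B: "\<And>s. s \<ge> 0 \<Longrightarrow> w s \<le> B" using nup by (auto simp: not_less)
        obtain A where A: "\<And>s. s \<ge> 0 \<Longrightarrow> A \<le> w s" using ndn by (auto simp: not_less)
        have "{A..B} \<noteq> {}" using A[of 0] B[of 0] by auto
        then obtain x where x: "x \<in> {A..B}" "\<And>y. y \<in> {A..B} \<Longrightarrow> L x \<le> L y"
          using continuous_attains_inf[OF compact_Icc _ contL] by blast
        have "L x \<le> (INF t\<in>{0..}. L (w t))"
          by (rule cINF_greatest) (use A B x in auto)
        then show ?thesis using inf0 Lpos[of x] by simp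
      qed
    qed
  qed
qed

lemma part2:
  fixes \<Psi> \<Psi>' :: "real \<Rightarrow> real^'n"
  assumes n2: "CARD('n) \<ge> 2"
    and dPsi: "\<And>v. (\<Psi> has_vector_derivative \<Psi>' v) (at v)"
  shows "GF_learnable \<Psi> \<in> null_sets lebesgue"
proof -
  have sub: "GF_learnable \<Psi> \<subseteq> range \<Psi> \<union> {Lim at_bot \<Psi>, Lim at_top \<Psi>}"
  proof
    fix f assume "f \<in> GF_learnable \<Psi>"
    from part1[OF dPsi this] show "f \<in> range \<Psi> \<union> {Lim at_bot \<Psi>, Lim at_top \<Psi>}"
      using tendsto_Lim[of at_bot \<Psi> f] tendsto_Lim[of at_top \<Psi> f] by auto
  qed
  have diff: "\<Psi> differentiable_on UNIV"
    using dPsi unfolding differentiable_on_def has_vector_derivative_def differentiable_def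
    by blast
  have "negligible (range \<Psi>)"
    by (rule negligible_differentiable_image_lowdim[OF _ diff]) (use n2 in simp)
  then have "negligible (range \<Psi> \<union> {Lim at_bot \<Psi>, Lim at_top \<Psi>})"
    by (rule negligible_Un) (auto intro: negligible_finite)
  then have "negligible (GF_learnable \<Psi>)" using sub negligible_subset by blast
  then show ?thesis by (simp add: negligible_iff_null_sets)
qed

theorem proposition1:
  fixes \<Phi> \<Phi>' :: "real \<Rightarrow> 'a::{real_inner,complete_space}" and f :: 'a
  assumes "\<And>v. (\<Phi> has_vector_derivative \<Phi>' v) (at v)"
    and "\<exists>C. C-lipschitz_on UNIV \<Phi>'"
    and "f \<in> GF_learnable \<Phi>"
  shows "((\<exists>v. f = \<Phi> v) \<or> (\<Phi> \<longlongrightarrow> f) at_bot \<or> (\<Phi> \<longlongrightarrow> f) at_top)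
    \<and> (\<forall>(\<Psi>::real \<Rightarrow> real^'n) \<Psi>'. CARD('n) \<ge> 2 \<longrightarrow>
          (\<forall>v. (\<Psi> has_vector_derivative \<Psi>' v) (at v)) \<longrightarrow>
          (\<exists>C. C-lipschitz_on UNIV \<Psi>') \<longrightarrow>
          GF_learnable \<Psi> \<in> null_sets lebesgue)"
  using part1[OF assms(1,3)] part2 by blast

end
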